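(* Algorithm $R_A$ (described in the context) is strategyproof over the domain of all monotonic profiles (for $n$ agents and alternatives $\{A,B\}$) that admit a unique stable assignment.
   Context: Agents $V=\{v_1,\dots,v_n\}$; two alternatives $A,B$. Each agent $v_i$ has a strict total order $\succ_i$ on $\{A,B\}\times\{1,\dots,n\}$, where $(S,j)$ means being in the community adopting $S$ of size $j$; it is monotonic if $(S,j)\succ_i(S,k)$ whenever $k<j$. An assignment is a map $f:V\to\{A,B\}$; $v_i$ prefers $f$ to $g$ if $(f(v_i),|f^{-1}(f(v_i))|)\succ_i(g(v_i),|g^{-1}(g(v_i))|)$. An assignment $f$ is stable if there is no assignment $f'\neq f$ such that every agent $v_i$ with $f'(v_i)\neq f(v_i)$ prefers $f'$ to $f$. Algorithm $R_A$: set $V_A=V$, $V_B=\emptyset$, $a=|V_A|$, $b=|V_B|$. Repeat: let $k$ be the largest $j\in\{1,\dots,a\}$ with $|\{v_i\in V_A:(B,b+j)\succ_i(A,a)\}|\ge j$, or $k=0$ if none exists. If $k=0$, output $f$ with $f^{-1}(A)=V_A$, $f^{-1}(B)=V_B$. Otherwise let $X=\{v_i\in V_A:(B,b+k)\succ_i(A,a)\}$, move $X$ from $V_A$ to $V_B$, update $a,b$, and repeat. A rule $R$ is strategyproof over a domain $D$ of profiles if for every $V\in D$ with $f=R(V)$ there is no agent $v_i$ and monotonic order $\succ_i'$ such that, with $V'$ obtained from $V$ by replacing $\succ_i$ by $\succ_i'$ and $f'=R(V')$, agent $v_i$ prefers $f'$ to $f$ according to her true order $\succ_i$. *)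

theory Defs
  imports Main
begin

datatype alt = A | B

type_synonym outcome = "alt \<times> nat"
(* (x,y) \<in> r  means  x \<succ> y *)
type_synonym pref = "(outcome \<times> outcome) set"
(* agents are 0..<n; P i is the order of agent i *)
type_synonym profile = "nat \<Rightarrow> pref"

definition outcomes :: "nat \<Rightarrow> outcome set" where
  "outcomes n = UNIV \<times> {1..n}"

definition strict_total_order :: "nat \<Rightarrow> pref \<Rightarrow> bool" where
  "strict_total_order n r \<longleftrightarrow> r \<subseteq> outcomes n \<times> outcomes n \<and> strict_linear_order_on (outcomes n) r"

definition monotonic :: "nat \<Rightarrow> pref \<Rightarrow> bool" where
  "monotonic n r \<longleftrightarrow> (\<forall>S j k. 1 \<le> k \<and> k < j \<and> j \<le> n \<longrightarrow> ((S, j), (S, k)) \<in> r)"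

definition monotonic_order :: "nat \<Rightarrow> pref \<Rightarrow> bool" where
  "monotonic_order n r \<longleftrightarrow> strict_total_order n r \<and> monotonic n r"

definition monotonic_profile :: "nat \<Rightarrow> profile \<Rightarrow> bool" where
  "monotonic_profile n P \<longleftrightarrow> (\<forall>i<n. monotonic_order n (P i))"

(* assignments f :: nat \<Rightarrow> alt, only values on agents 0..<n matter *)
definition comm_size :: "nat \<Rightarrow> (nat \<Rightarrow> alt) \<Rightarrow> nat \<Rightarrow> nat" where
  "comm_size n f i = card {j. j < n \<and> f j = f i}"

definition prefers :: "nat \<Rightarrow> pref \<Rightarrow> nat \<Rightarrow> (nat \<Rightarrow> alt) \<Rightarrow> (nat \<Rightarrow> alt) \<Rightarrow> bool" where
  "prefers n r i f g \<longleftrightarrow> ((f i, comm_size n f i), (g i, comm_size n g i)) \<in> r"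

definition same_assignment :: "nat \<Rightarrow> (nat \<Rightarrow> alt) \<Rightarrow> (nat \<Rightarrow> alt) \<Rightarrow> bool" where
  "same_assignment n f g \<longleftrightarrow> (\<forall>i<n. f i = g i)"

definition stable :: "nat \<Rightarrow> profile \<Rightarrow> (nat \<Rightarrow> alt) \<Rightarrow> bool" where
  "stable n P f \<longleftrightarrow> \<not> (\<exists>f'. \<not> same_assignment n f' f \<and>
       (\<forall>i<n. f' i \<noteq> f i \<longrightarrow> prefers n (P i) i f' f))"

definition unique_stable :: "nat \<Rightarrow> profile \<Rightarrow> bool" where
  "unique_stable n P \<longleftrightarrow> (\<exists>f. stable n P f \<and> (\<forall>g. stable n P g \<longrightarrow> same_assignment n g f))"

definition RA_cand :: "profile \<Rightarrow> nat set \<Rightarrow> nat set \<Rightarrow> nat \<Rightarrow> nat set" where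
  "RA_cand P VA VB j = {i \<in> VA. ((B, card VB + j), (A, card VA)) \<in> P i}"

definition RA_K :: "profile \<Rightarrow> nat set \<Rightarrow> nat set \<Rightarrow> nat set" where
  "RA_K P VA VB = {j \<in> {1..card VA}. card (RA_cand P VA VB j) \<ge> j}"

lemma RA_term:
  assumes "RA_K P VA VB \<noteq> {}"
  shows "card (VA - RA_cand P VA VB (Max (RA_K P VA VB))) < card VA"
proof -
  let ?K = "RA_K P VA VB" let ?k = "Max ?K"
  have fin: "finite ?K" unfolding RA_K_def by simp
  have "?k \<in> ?K" using Max_in[OF fin assms] .
  hence k: "1 \<le> ?k" "?k \<le> card VA" "card (RA_cand P VA VB ?k) \<ge> ?k"
    unfolding RA_K_def by auto
  hence "card VA > 0" by linarith
  hence finVA: "finite VA" using card_gt_0_iff by blast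
  have "RA_cand P VA VB ?k \<noteq> {}" using k by (metis card.empty not_one_le_zero order_trans)
  moreover have sub: "RA_cand P VA VB ?k \<subseteq> VA" unfolding RA_cand_def by auto
  ultimately show ?thesis using finVA
  proof -
    let ?X = "RA_cand P VA VB ?k"
    assume a: "?X \<noteq> {}" "?X \<subseteq> VA" "finite VA"
    have "finite ?X" using a finite_subset by blast
    hence "card ?X > 0" using a(1) by (simp add: card_gt_0_iff)
    moreover have "card (VA - ?X) = card VA - card ?X" using a \<open>finite ?X\<close> by (simp add: card_Diff_subset)
    moreover have "card ?X \<le> card VA" using a card_mono by blast
    ultimately show ?thesis using \<open>card VA > 0\<close> by linarith
  qed
qed

function RA_loop :: "profile \<Rightarrow> nat set \<Rightarrow> nat set \<Rightarrow> nat set" where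
  "RA_loop P VA VB =
     (if RA_K P VA VB = {} then VA
      else (let X = RA_cand P VA VB (Max (RA_K P VA VB)) in RA_loop P (VA - X) (VB \<union> X)))"
  by pat_completeness auto
termination
  by (relation "measure (\<lambda>(P, VA, VB). card VA)") (auto simp: Let_def intro: RA_term)

definition RA :: "nat \<Rightarrow> profile \<Rightarrow> (nat \<Rightarrow> alt)" where
  "RA n P = (\<lambda>i. if i \<in> RA_loop P {0..<n} {} then A else B)"

definition strategyproof_on :: "nat \<Rightarrow> (nat \<Rightarrow> profile \<Rightarrow> (nat \<Rightarrow> alt)) \<Rightarrow> (profile \<Rightarrow> bool) \<Rightarrow> bool" where
  "strategyproof_on n R D \<longleftrightarrow>
     (\<forall>P. D P \<longrightarrow> \<not> (\<exists>i r'. i < n \<and> monotonic_order n r' \<and>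
          prefers n (P i) i (R n (P(i := r'))) (R n P)))"

end

theory Submission
  imports Defs
begin

lemma mo_trans: "monotonic_order n r \<Longrightarrow> (x,y) \<in> r \<Longrightarrow> (y,z) \<in> r \<Longrightarrow> (x,z) \<in> r"
  unfolding monotonic_order_def strict_total_order_def strict_linear_order_on_def
  by (meson trans_def)

lemma mo_irrefl: "monotonic_order n r \<Longrightarrow> (x,x) \<notin> r"
  unfolding monotonic_order_def strict_total_order_def strict_linear_order_on_def
  by (meson irrefl_def)

lemma mo_out: "monotonic_order n r \<Longrightarrow> ((S,j),(T,k)) \<in> r \<Longrightarrow> 1 \<le> j \<and> j \<le> n \<and> 1 \<le> k \<and> k \<le> n"
  unfolding monotonic_order_def strict_total_order_def outcomes_def by auto

lemma mo_mono: "monotonic_order n r \<Longrightarrow> 1 \<le> k \<Longrightarrow> k < j \<Longrightarrow> j \<le> n \<Longrightarrow> ((S,j),(S,k)) \<in> r"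
  unfolding monotonic_order_def monotonic_def by auto

lemma mo_mono_le1: "monotonic_order n r \<Longrightarrow> ((S,k),y) \<in> r \<Longrightarrow> k \<le> j \<Longrightarrow> j \<le> n \<Longrightarrow> ((S,j),y) \<in> r"
proof -
  assume a: "monotonic_order n r" "((S,k),y) \<in> r" "k \<le> j" "j \<le> n"
  obtain T m where y: "y = (T,m)" by (cases y)
  show ?thesis
  proof (cases "k = j")
    case True thus ?thesis using a by simp
  next
    case False
    have "1 \<le> k" using mo_out[OF a(1)] a(2) y by blast
    hence "((S,j),(S,k)) \<in> r" using mo_mono[OF a(1)] a False by simp
    thus ?thesis using mo_trans[OF a(1)] a(2) by blast
  qed
qed

lemma mo_mono_le2: "monotonic_order n r \<Longrightarrow> (x,(S,j)) \<in> r \<Longrightarrow> k \<le> j \<Longrightarrow> 1 \<le> k \<Longrightarrow> (x,(S,k)) \<in> r"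
proof -
  assume a: "monotonic_order n r" "(x,(S,j)) \<in> r" "k \<le> j" "1 \<le> k"
  obtain T m where y: "x = (T,m)" by (cases x)
  show ?thesis
  proof (cases "k = j")
    case True thus ?thesis using a by simp
  next
    case False
    have "j \<le> n" using mo_out[OF a(1)] a(2) y by blast
    hence "((S,j),(S,k)) \<in> r" using mo_mono[OF a(1)] a False by simp
    thus ?thesis using mo_trans[OF a(1)] a(2) by blast
  qed
qed

lemma mo_no_up: "monotonic_order n r \<Longrightarrow> ((S,k),(S,j)) \<in> r \<Longrightarrow> k \<le> j \<Longrightarrow> False"
  by (metis mo_irrefl mo_mono_le1 mo_out)

fun oth :: "alt \<Rightarrow> alt" where "oth A = B" | "oth B = A"

lemma oth_oth[simp]: "oth (oth s) = s" by (cases s) auto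
lemma oth_neq[simp]: "oth s \<noteq> s" "s \<noteq> oth s" by (cases s; auto)+
lemma alt_other: "x \<noteq> s \<Longrightarrow> x = oth s" by (cases x; cases s) auto

definition cnt :: "nat \<Rightarrow> (nat \<Rightarrow> alt) \<Rightarrow> alt \<Rightarrow> nat" where
  "cnt n h s = card {j. j < n \<and> h j = s}"

definition cset :: "nat \<Rightarrow> profile \<Rightarrow> (nat \<Rightarrow> alt) \<Rightarrow> alt \<Rightarrow> nat \<Rightarrow> nat set" where
  "cset n P h s p = {j. j < n \<and> h j = s \<and> ((oth s, n - cnt n h s + p), (s, cnt n h s)) \<in> P j}"

definition cond :: "nat \<Rightarrow> profile \<Rightarrow> (nat \<Rightarrow> alt) \<Rightarrow> alt \<Rightarrow> bool" where
  "cond n P h s \<longleftrightarrow> (\<forall>p. card (cset n P h s p) \<le> p - 1)"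

lemma cset_fin[simp]: "finite (cset n P h s p)"
  unfolding cset_def by (rule finite_subset[of _ "{..<n}"]) auto

lemma cnt_sum: "cnt n h s + cnt n h (oth s) = n"
proof -
  have "{j. j < n \<and> h j = s} \<union> {j. j < n \<and> h j = oth s} = {..<n}"
    using alt_other by auto
  moreover have "{j. j < n \<and> h j = s} \<inter> {j. j < n \<and> h j = oth s} = {}" by auto
  ultimately show ?thesis unfolding cnt_def
    by (metis (no_types, lifting) card_Un_disjoint card_lessThan finite_Un finite_lessThan)
qed

lemma comm_size_cnt: "comm_size n f i = cnt n f (f i)"
  unfolding comm_size_def cnt_def by simp


lemma card_moved:
  fixes h f' :: "nat \<Rightarrow> alt" and n :: nat and s :: alt
  defines "Ms \<equiv> {j. j < n \<and> h j = s \<and> f' j \<noteq> s}"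
  defines "Mt \<equiv> {j. j < n \<and> h j = oth s \<and> f' j \<noteq> oth s}"
  shows "cnt n f' (oth s) + card Mt = cnt n h (oth s) + card Ms"
proof -
  let ?W = "{j. j < n \<and> h j = oth s}"
  have fW: "finite ?W" by (rule finite_subset[of _ "{..<n}"]) auto
  have eq: "{j. j < n \<and> f' j = oth s} = (?W - Mt) \<union> Ms"
    unfolding Ms_def Mt_def using alt_other by auto
  have d: "(?W - Mt) \<inter> Ms = {}" unfolding Ms_def Mt_def by auto
  have fMs: "finite Ms" unfolding Ms_def by (rule finite_subset[of _ "{..<n}"]) auto
  have sub: "Mt \<subseteq> ?W" unfolding Mt_def by auto
  have "cnt n f' (oth s) = card (?W - Mt) + card Ms"
    unfolding cnt_def eq using d fW fMs by (simp add: card_Un_disjoint)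
  moreover have "card (?W - Mt) + card Mt = card ?W"
    using sub fW by (metis card_Diff_subset card_mono finite_subset le_add_diff_inverse2)
  ultimately show ?thesis unfolding cnt_def by linarith
qed

lemma no_block:
  assumes mp: "monotonic_profile n P" and c: "cond n P h s"
    and ge: "card {j. j < n \<and> h j = oth s \<and> f' j \<noteq> oth s} \<le> card {j. j < n \<and> h j = s \<and> f' j \<noteq> s}"
    and pos: "1 \<le> card {j. j < n \<and> h j = s \<and> f' j \<noteq> s}"
    and pr: "\<forall>j<n. f' j \<noteq> h j \<longrightarrow> prefers n (P j) j f' h"
  shows False
proof -
  define Ms where "Ms = {j. j < n \<and> h j = s \<and> f' j \<noteq> s}"
  define Mt where "Mt = {j. j < n \<and> h j = oth s \<and> f' j \<noteq> oth s}"
  have cm: "cnt n f' (oth s) + card Mt = cnt n h (oth s) + card Ms"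
    unfolding Ms_def Mt_def by (rule card_moved)
  have nn: "n - cnt n h s = cnt n h (oth s)" using cnt_sum[of n h s] by linarith
  have "Ms \<subseteq> cset n P h s (card Ms)"
  proof
    fix j assume j: "j \<in> Ms"
    hence j1: "j < n" "h j = s" "f' j = oth s" unfolding Ms_def using alt_other by auto
    have mo: "monotonic_order n (P j)" using mp j1 unfolding monotonic_profile_def by auto
    have "prefers n (P j) j f' h" using pr j1 by auto
    hence "((oth s, cnt n f' (oth s)), (s, cnt n h s)) \<in> P j"
      unfolding prefers_def comm_size_cnt using j1 by simp
    moreover have "cnt n f' (oth s) \<le> cnt n h (oth s) + card Ms" using cm by linarith
    moreover have "cnt n h (oth s) + card Ms \<le> n"
    proof -
      have "Ms \<subseteq> {j. j < n \<and> h j = s}" unfolding Ms_def by auto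
      hence "card Ms \<le> cnt n h s" unfolding cnt_def
        by (rule card_mono[rotated]) (rule finite_subset[of _ "{..<n}"], auto)
      thus ?thesis using cnt_sum[of n h s] by linarith
    qed
    ultimately have "((oth s, cnt n h (oth s) + card Ms), (s, cnt n h s)) \<in> P j"
      using mo_mono_le1[OF mo] by blast
    thus "j \<in> cset n P h s (card Ms)" unfolding cset_def using j1 nn by simp
  qed
  hence "card Ms \<le> card (cset n P h s (card Ms))" by (simp add: card_mono)
  moreover have "card (cset n P h s (card Ms)) \<le> card Ms - 1" using c unfolding cond_def by blast
  ultimately show False using pos unfolding Ms_def by linarith
qed

lemma stable_of_cond:
  assumes mp: "monotonic_profile n P" and cA: "cond n P h A" and cB: "cond n P h B"
  shows "stable n P h"
  unfolding stable_def
proof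
  assume "\<exists>f'. \<not> same_assignment n f' h \<and> (\<forall>i<n. f' i \<noteq> h i \<longrightarrow> prefers n (P i) i f' h)"
  then obtain f' where nf: "\<not> same_assignment n f' h"
    and pr: "\<forall>i<n. f' i \<noteq> h i \<longrightarrow> prefers n (P i) i f' h" by blast
  obtain j0 where j0: "j0 < n" "f' j0 \<noteq> h j0" using nf unfolding same_assignment_def by auto
  define mA where "mA = card {j. j < n \<and> h j = A \<and> f' j \<noteq> A}"
  define mB where "mB = card {j. j < n \<and> h j = B \<and> f' j \<noteq> B}"
  have fin: "\<And>s. finite {j. j < n \<and> h j = s \<and> f' j \<noteq> s}"
    by (rule finite_subset[of _ "{..<n}"]) auto
  have "j0 \<in> {j. j < n \<and> h j = h j0 \<and> f' j \<noteq> h j0}" using j0 by auto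
  hence p0: "1 \<le> card {j. j < n \<and> h j = h j0 \<and> f' j \<noteq> h j0}"
    using fin by (metis One_nat_def Suc_leI card_gt_0_iff empty_iff)
  show False
  proof (cases "mB \<le> mA")
    case True
    have "1 \<le> mA"
    proof (cases "h j0")
      case A thus ?thesis using p0 mA_def by simp
    next
      case B thus ?thesis using p0 mB_def True by simp
    qed
    thus False using no_block[OF mp cA, of f'] True pr unfolding mA_def mB_def by simp
  next
    case False
    thus False using no_block[OF mp cB, of f'] pr unfolding mA_def mB_def by simp
  qed
qed


lemma cnt_pos: "j < n \<Longrightarrow> h j = t \<Longrightarrow> 1 \<le> cnt n h t"
proof -
  assume a: "j < n" "h j = t"
  have f: "finite {j. j < n \<and> h j = t}" by (rule finite_subset[of _ "{..<n}"]) auto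
  have "j \<in> {j. j < n \<and> h j = t}" using a by simp
  hence "{j. j < n \<and> h j = t} \<noteq> {}" by blast
  thus ?thesis unfolding cnt_def using f by (simp add: Suc_le_eq card_gt_0_iff)
qed

lemma cnt_move:
  assumes X: "X \<subseteq> {j. j < n \<and> h j = oth t}"
  shows "cnt n (\<lambda>j. if j \<in> X then t else h j) t = cnt n h t + card X"
proof -
  have eq: "{j. j < n \<and> (if j \<in> X then t else h j) = t} = {j. j < n \<and> h j = t} \<union> X"
    using X by auto
  have d: "{j. j < n \<and> h j = t} \<inter> X = {}" using X by auto
  have f1: "finite {j. j < n \<and> h j = t}" by (rule finite_subset[of _ "{..<n}"]) auto
  have f2: "finite X" using X by (rule finite_subset) (rule finite_subset[of _ "{..<n}"], auto)
  show ?thesis unfolding cnt_def eq using d f1 f2 by (simp add: card_Un_disjoint)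
qed

lemma preserve:
  assumes mp: "monotonic_profile n P" and c: "cond n P h t"
    and X: "X \<subseteq> {j. j < n \<and> h j = oth t}" and Xne: "X \<noteq> {}"
    and pX: "\<forall>j\<in>X. ((t, cnt n h t + card X), (oth t, cnt n h (oth t))) \<in> P j"
  shows "cond n P (\<lambda>j. if j \<in> X then t else h j) t"
proof -
  define h' where "h' = (\<lambda>j. if j \<in> X then t else h j)"
  define s where "s = oth t"
  define cs where "cs = cnt n h s"
  define ct where "ct = cnt n h t"
  define x where "x = card X"
  have sum: "ct + cs = n" unfolding ct_def cs_def s_def using cnt_sum by blast
  have ct': "cnt n h' t = ct + x" unfolding h'_def ct_def x_def using cnt_move[OF X] .
  have sum': "cnt n h' t + cnt n h' s = n" unfolding s_def using cnt_sum by blast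
  have finX: "finite X" using X by (rule finite_subset) (rule finite_subset[of _ "{..<n}"], auto)
  have xpos: "1 \<le> x" unfolding x_def using Xne finX by (simp add: Suc_le_eq card_gt_0_iff)
  have xle: "x \<le> cs"
  proof -
    have "card X \<le> cnt n h (oth t)" unfolding cnt_def
      by (rule card_mono[OF _ X]) (rule finite_subset[of _ "{..<n}"], auto)
    thus ?thesis unfolding x_def cs_def s_def .
  qed
  have oths: "oth t = s" unfolding s_def ..
  have othts: "oth s = t" unfolding s_def by simp
  have c0: "cset n P h t 0 = {}"
  proof -
    have "card (cset n P h t 0) \<le> 0" using c unfolding cond_def by (metis diff_0_eq_0)
    thus ?thesis by simp
  qed
  show ?thesis unfolding cond_def h'_def[symmetric]
  proof
    fix q
    have ns: "n - (ct + x) + q = cs - x + q" using sum by linarith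
    have cq: "cset n P h' t q = {j. j < n \<and> h' j = t \<and> ((s, cs - x + q), (t, ct + x)) \<in> P j}"
      unfolding cset_def ns ct' oths ..
    show "card (cset n P h' t q) \<le> q - 1"
    proof (cases "q \<le> x")
      case True
      have "cset n P h' t q = {}"
      proof (rule ccontr)
        assume "cset n P h' t q \<noteq> {}"
        then obtain j where j: "j < n" "h' j = t" "((s, cs - x + q), (t, ct + x)) \<in> P j"
          using cq by auto
        have mo: "monotonic_order n (P j)" using mp j unfolding monotonic_profile_def by auto
        show False
        proof (cases "j \<in> X")
          case True
          have "((t, ct + x), (s, cs)) \<in> P j" using pX True unfolding ct_def x_def cs_def s_def by auto
          hence r1: "((s, cs - x + q), (s, cs)) \<in> P j" using mo_trans[OF mo j(3)] by blast
          have "cs - x + q \<le> cs" using \<open>q \<le> x\<close> xle by linarith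
          thus False using mo_no_up[OF mo r1] by simp
        next
          case False
          hence hj: "h j = t" using j unfolding h'_def by auto
          have "1 \<le> ct" unfolding ct_def using cnt_pos[of j n h t, OF j(1) hj] .
          have "cs \<le> n" using sum by linarith
          have "((s, cs), (t, ct + x)) \<in> P j"
            using mo_mono_le1[OF mo j(3), of cs] \<open>q \<le> x\<close> xle \<open>cs \<le> n\<close> by simp
          hence "((s, cs), (t, ct)) \<in> P j" using mo_mono_le2[OF mo _ _ \<open>1 \<le> ct\<close>] by (metis le_add1)
          moreover have "n - ct + 0 = cs" using sum by linarith
          ultimately have "j \<in> cset n P h t 0" unfolding cset_def oths ct_def[symmetric]
            using j(1) hj by simp
          thus False using c0 by auto
        qed
      qed
      thus ?thesis by simp
    next
      case False
      have sub: "cset n P h' t q \<subseteq> cset n P h t (q - x) \<union> X"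
      proof
        fix j assume "j \<in> cset n P h' t q"
        hence j: "j < n" "h' j = t" "((s, cs - x + q), (t, ct + x)) \<in> P j" using cq by auto
        show "j \<in> cset n P h t (q - x) \<union> X"
        proof (cases "j \<in> X")
          case False
          hence hj: "h j = t" using j unfolding h'_def by auto
          have mo: "monotonic_order n (P j)" using mp j unfolding monotonic_profile_def by auto
          have "1 \<le> ct" unfolding ct_def using cnt_pos[of j n h t, OF j(1) hj] .
          have "((s, cs - x + q), (t, ct)) \<in> P j" using mo_mono_le2[OF mo j(3) _ \<open>1 \<le> ct\<close>] by (metis le_add1)
          moreover have "cs - x + q = n - ct + (q - x)" using sum xle \<open>\<not> q \<le> x\<close> by linarith
          ultimately show ?thesis unfolding cset_def using j hj oths by (simp add: ct_def)
        qed simp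
      qed
      have "card (cset n P h' t q) \<le> card (cset n P h t (q - x) \<union> X)"
        using sub finX by (simp add: card_mono)
      also have "\<dots> \<le> card (cset n P h t (q - x)) + card X" by (rule card_Un_le)
      also have "\<dots> \<le> (q - x - 1) + x"
      proof -
        have "card (cset n P h t (q - x)) \<le> q - x - 1" using c unfolding cond_def by blast
        thus ?thesis unfolding x_def by linarith
      qed
      finally show ?thesis using False by linarith
    qed
  qed
qed

lemma exists_stable:
  assumes mp: "monotonic_profile n P"
  shows "cond n P h t \<Longrightarrow> \<exists>h'. (\<forall>j<n. h j = t \<longrightarrow> h' j = t) \<and> cond n P h' A \<and> cond n P h' B"
proof (induction "cnt n h (oth t)" arbitrary: h rule: less_induct)
  case less
  show ?case
  proof (cases "cond n P h (oth t)")
    case True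
    hence "cond n P h A \<and> cond n P h B" using less.prems by (cases t) auto
    thus ?thesis by blast
  next
    case False
    define s where "s = oth t"
    then obtain p where p: "\<not> card (cset n P h s p) \<le> p - 1" using False unfolding cond_def by auto
    define X where "X = cset n P h s p"
    have Xsub: "X \<subseteq> {j. j < n \<and> h j = oth t}" unfolding X_def cset_def s_def by auto
    have Xne: "X \<noteq> {}" using p X_def by auto
    have cX: "p \<le> card X" using p unfolding X_def by linarith
    have finX: "finite X" unfolding X_def by simp
    have xle: "card X \<le> cnt n h s"
      unfolding cnt_def s_def
      by (rule card_mono[OF _ Xsub]) (rule finite_subset[of _ "{..<n}"], auto)
    have sum: "cnt n h t + cnt n h s = n" unfolding s_def using cnt_sum by blast
    have pX: "\<forall>j\<in>X. ((t, cnt n h t + card X), (oth t, cnt n h (oth t))) \<in> P j"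
    proof
      fix j assume j: "j \<in> X"
      hence j1: "j < n" "((t, n - cnt n h s + p), (s, cnt n h s)) \<in> P j"
        unfolding X_def cset_def s_def by auto
      have mo: "monotonic_order n (P j)" using mp j1 unfolding monotonic_profile_def by auto
      have "n - cnt n h s + p = cnt n h t + p" using sum by linarith
      hence "((t, cnt n h t + card X), (s, cnt n h s)) \<in> P j"
        using mo_mono_le1[OF mo j1(2), of "cnt n h t + card X"] cX xle sum by simp
      thus "((t, cnt n h t + card X), (oth t, cnt n h (oth t))) \<in> P j" unfolding s_def .
    qed
    define h' where "h' = (\<lambda>j. if j \<in> X then t else h j)"
    have c': "cond n P h' t" unfolding h'_def by (rule preserve[OF mp less.prems Xsub Xne pX])
    have "cnt n h' t = cnt n h t + card X" unfolding h'_def using cnt_move[OF Xsub] .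
    moreover have "cnt n h' t + cnt n h' (oth t) = n" using cnt_sum by blast
    moreover have "card X \<ge> 1" using Xne finX by (simp add: Suc_le_eq card_gt_0_iff)
    ultimately have lt: "cnt n h' (oth t) < cnt n h (oth t)" using sum unfolding s_def by linarith
    obtain h'' where h'': "\<forall>j<n. h' j = t \<longrightarrow> h'' j = t" "cond n P h'' A" "cond n P h'' B"
      using less.hyps[OF lt c'] by blast
    have "\<forall>j<n. h j = t \<longrightarrow> h'' j = t" using h''(1) unfolding h'_def by auto
    thus ?thesis using h'' by blast
  qed
qed


lemma cnt_ind_A: "VA \<subseteq> {0..<n} \<Longrightarrow> cnt n (\<lambda>j. if j \<in> VA then A else B) A = card VA"
proof -
  assume a: "VA \<subseteq> {0..<n}"
  have "{j. j < n \<and> (if j \<in> VA then A else B) = A} = VA" using a by auto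
  thus ?thesis unfolding cnt_def by simp
qed

lemma cnt_ind_B: "VA \<subseteq> {0..<n} \<Longrightarrow> cnt n (\<lambda>j. if j \<in> VA then A else B) B = card ({0..<n} - VA)"
proof -
  assume a: "VA \<subseteq> {0..<n}"
  have "{j. j < n \<and> (if j \<in> VA then A else B) = B} = {0..<n} - VA" using a by auto
  thus ?thesis unfolding cnt_def by simp
qed

lemma RA_inv:
  "monotonic_profile n P \<Longrightarrow> VA \<subseteq> {0..<n} \<Longrightarrow> VB = {0..<n} - VA \<Longrightarrow>
   cond n P (\<lambda>j. if j \<in> VA then A else B) B \<Longrightarrow>
   cond n P (\<lambda>j. if j \<in> RA_loop P VA VB then A else B) A \<and>
   cond n P (\<lambda>j. if j \<in> RA_loop P VA VB then A else B) B"
proof (induction P VA VB rule: RA_loop.induct)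
  case (1 P VA VB)
  note mp = "1.prems"(1) and sub = "1.prems"(2) and VB = "1.prems"(3) and cB = "1.prems"(4)
  define h where "h = (\<lambda>j. if j \<in> VA then A else B)"
  have finVA: "finite VA" using sub finite_subset by blast
  have sumV: "card VA + card VB = n"
  proof -
    have "card VB = card {0..<n} - card VA" using VB sub finVA by (simp add: card_Diff_subset)
    moreover have "card VA \<le> card {0..<n}" using sub by (metis card_mono finite_atLeastLessThan)
    ultimately show ?thesis by simp
  qed
  have cA: "cnt n h A = card VA" unfolding h_def using cnt_ind_A[OF sub] .
  have cBB: "cnt n h B = card VB" unfolding h_def using cnt_ind_B[OF sub] VB by simp
  have csetA: "\<And>p. cset n P h A p = RA_cand P VA VB p"
  proof -
    fix p
    have "n - card VA + p = card VB + p" using sumV by linarith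
    thus "cset n P h A p = RA_cand P VA VB p"
      unfolding cset_def RA_cand_def cA using sub unfolding h_def by auto
  qed
  show ?case
  proof (cases "RA_K P VA VB = {}")
    case True
    hence L: "RA_loop P VA VB = VA" by simp
    have "cond n P h A" unfolding cond_def csetA
    proof
      fix p
      show "card (RA_cand P VA VB p) \<le> p - 1"
      proof (cases "p = 0")
        case True
        have "RA_cand P VA VB 0 = {}"
        proof (rule ccontr)
          assume "RA_cand P VA VB 0 \<noteq> {}"
          then obtain j where j: "j \<in> VA" "((B, card VB + 0), (A, card VA)) \<in> P j"
            unfolding RA_cand_def by auto
          have jn: "j < n" using j sub by auto
          have mo: "monotonic_order n (P j)" using mp jn unfolding monotonic_profile_def by auto
          have "1 \<le> card VA" using j finVA by (metis One_nat_def Suc_leI card_gt_0_iff empty_iff)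
          hence "card VB + 1 \<le> n" using sumV by linarith
          hence "((B, card VB + 1), (A, card VA)) \<in> P j" using mo_mono_le1[OF mo j(2)] by simp
          hence "j \<in> RA_cand P VA VB 1" unfolding RA_cand_def using j by simp
          moreover have "finite (RA_cand P VA VB 1)"
            using finVA by (rule finite_subset[rotated]) (auto simp: RA_cand_def)
          ultimately have "1 \<le> card (RA_cand P VA VB 1)"
            by (metis One_nat_def Suc_leI card_gt_0_iff empty_iff)
          hence "1 \<in> RA_K P VA VB" unfolding RA_K_def using \<open>1 \<le> card VA\<close> by auto
          thus False using \<open>RA_K P VA VB = {}\<close> by simp
        qed
        thus ?thesis using True by simp
      next
        case False
        show ?thesis
        proof (cases "p \<le> card VA")
          case True
          hence "p \<notin> RA_K P VA VB" using \<open>RA_K P VA VB = {}\<close> by simp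
          hence "\<not> card (RA_cand P VA VB p) \<ge> p" unfolding RA_K_def using True False by auto
          thus ?thesis by linarith
        next
          case False
          have "RA_cand P VA VB p = {}"
          proof (rule ccontr)
            assume "RA_cand P VA VB p \<noteq> {}"
            then obtain j where j: "j \<in> VA" "((B, card VB + p), (A, card VA)) \<in> P j"
              unfolding RA_cand_def by auto
            have jn: "j < n" using j sub by auto
            have mo: "monotonic_order n (P j)" using mp jn unfolding monotonic_profile_def by auto
            have "card VB + p \<le> n" using mo_out[OF mo j(2)] by blast
            thus False using False sumV by linarith
          qed
          thus ?thesis by simp
        qed
      qed
    qed
    thus ?thesis using cB L unfolding h_def by simp
  next
    case False
    define k where "k = Max (RA_K P VA VB)"
    define X where "X = RA_cand P VA VB k"
    have L: "RA_loop P VA VB = RA_loop P (VA - X) (VB \<union> X)"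
      using False unfolding X_def k_def by (simp add: Let_def)
    have finK: "finite (RA_K P VA VB)" unfolding RA_K_def by simp
    have kK: "k \<in> RA_K P VA VB" unfolding k_def using Max_in[OF finK False] .
    hence k: "1 \<le> k" "k \<le> card VA" "k \<le> card X" unfolding RA_K_def X_def by auto
    have XVA: "X \<subseteq> VA" unfolding X_def RA_cand_def by auto
    have finX: "finite X" using XVA finVA finite_subset by blast
    have Xne: "X \<noteq> {}" using k finX by auto
    have cXle: "card X \<le> card VA" using XVA finVA by (simp add: card_mono)
    have Xsub: "X \<subseteq> {j. j < n \<and> h j = oth B}" using XVA sub unfolding h_def by auto
    have pX: "\<forall>j\<in>X. ((B, cnt n h B + card X), (oth B, cnt n h (oth B))) \<in> P j"
    proof
      fix j assume j: "j \<in> X"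
      hence j1: "j \<in> VA" "((B, card VB + k), (A, card VA)) \<in> P j" unfolding X_def RA_cand_def by auto
      have jn: "j < n" using j1 sub by auto
      have mo: "monotonic_order n (P j)" using mp jn unfolding monotonic_profile_def by auto
      have "((B, card VB + card X), (A, card VA)) \<in> P j"
        using mo_mono_le1[OF mo j1(2), of "card VB + card X"] k cXle sumV by simp
      thus "((B, cnt n h B + card X), (oth B, cnt n h (oth B))) \<in> P j" using cA cBB by simp
    qed
    have c': "cond n P (\<lambda>j. if j \<in> X then B else h j) B"
      by (rule preserve[OF mp cB[folded h_def] Xsub Xne pX])
    have heq: "(\<lambda>j. if j \<in> X then B else h j) = (\<lambda>j. if j \<in> VA - X then A else B)"
      unfolding h_def by auto
    have s1: "VA - X \<subseteq> {0..<n}" using sub by auto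
    have s2: "VB \<union> X = {0..<n} - (VA - X)" using VB XVA sub by auto
    have s3: "cond n P (\<lambda>j. if j \<in> VA - X then A else B) B" using c' heq by simp
    note ih = "1.IH"[OF False X_def[unfolded k_def] mp s1 s2 s3]
    have IH: "cond n P (\<lambda>j. if j \<in> RA_loop P (VA - X) (VB \<union> X) then A else B) A \<and>
       cond n P (\<lambda>j. if j \<in> RA_loop P (VA - X) (VB \<union> X) then A else B) B"
      using ih .
    thus ?thesis using L by simp
  qed
qed

lemma RA_out:
  assumes mp: "monotonic_profile n Q"
  shows "cond n Q (RA n Q) A \<and> cond n Q (RA n Q) B"
proof -
  have c0: "cond n Q (\<lambda>j. if j \<in> {0..<n} then A else B) B"
    unfolding cond_def cset_def by auto
  show ?thesis unfolding RA_def using RA_inv[OF mp _ _ c0] by simp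
qed


lemma cset_sub:
  assumes "\<forall>j<n. j \<noteq> i \<longrightarrow> P j = Q j" "i \<notin> cset n P h s p"
  shows "cset n P h s p \<subseteq> cset n Q h s p"
  using assms unfolding cset_def by auto

lemma cset_eq:
  assumes "\<forall>j<n. h j = s \<longrightarrow> P j = Q j"
  shows "cset n P h s p = cset n Q h s p"
  using assms unfolding cset_def by auto

lemma same_outcome:
  assumes "same_assignment n g f" "i < n"
  shows "g i = f i \<and> comm_size n g i = comm_size n f i"
proof -
  have "{j. j < n \<and> g j = g i} = {j. j < n \<and> f j = f i}"
    using assms unfolding same_assignment_def by auto
  thus ?thesis using assms unfolding same_assignment_def comm_size_def by simp
qed

lemma cond_both: "cond n P h s \<Longrightarrow> cond n P h (oth s) \<Longrightarrow> cond n P h A \<and> cond n P h B"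
  by (cases s) auto

theorem lemma1:
  fixes n :: nat
  shows "strategyproof_on n RA (\<lambda>P. monotonic_profile n P \<and> unique_stable n P)"
  unfolding strategyproof_on_def
proof (intro allI impI notI)
  fix P assume D: "monotonic_profile n P \<and> unique_stable n P"
  hence mp: "monotonic_profile n P" and us: "unique_stable n P" by auto
  assume "\<exists>i r'. i < n \<and> monotonic_order n r' \<and> prefers n (P i) i (RA n (P(i := r'))) (RA n P)"
  then obtain i r' where i: "i < n" and r': "monotonic_order n r'"
    and pr: "prefers n (P i) i (RA n (P(i := r'))) (RA n P)" by blast
  define P' where "P' = P(i := r')"
  define g where "g = RA n P'"
  define f0 where "f0 = RA n P"
  have mp': "monotonic_profile n P'" using mp r' unfolding P'_def monotonic_profile_def by auto
  have mo: "monotonic_order n (P i)" using mp i unfolding monotonic_profile_def by auto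
  have cg: "cond n P' g A \<and> cond n P' g B" unfolding g_def using RA_out[OF mp'] .
  have cf: "cond n P f0 A \<and> cond n P f0 B" unfolding f0_def using RA_out[OF mp] .
  obtain f where f: "stable n P f" "\<forall>g. stable n P g \<longrightarrow> same_assignment n g f"
    using us unfolding unique_stable_def by blast
  have f0f: "same_assignment n f0 f" using f stable_of_cond[OF mp] cf by blast
  have PP': "\<forall>j<n. j \<noteq> i \<longrightarrow> P j = P' j" unfolding P'_def by simp
  have PP'2: "\<forall>j<n. j \<noteq> i \<longrightarrow> P' j = P j" unfolding P'_def by simp
  define s where "s = g i"
  define t where "t = oth s"
  have ost: "oth t = s" unfolding t_def by simp
  have pr2: "((s, cnt n g s), (f0 i, comm_size n f0 i)) \<in> P i"
    using pr unfolding prefers_def g_def[symmetric] P'_def[symmetric] f0_def[symmetric] s_def comm_size_cnt[of n g i]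
    by simp
  have ct: "cond n P g t"
  proof -
    have "\<forall>j<n. g j = t \<longrightarrow> P j = P' j" using PP' unfolding t_def s_def by auto
    hence "\<And>p. cset n P g t p = cset n P' g t p" by (rule cset_eq)
    moreover have "cond n P' g t" using cg by (cases t) auto
    ultimately show ?thesis unfolding cond_def by simp
  qed
  show False
  proof (cases "cond n P g s")
    case True
    have "cond n P g A \<and> cond n P g B" using cond_both[OF ct] True ost by simp
    hence "stable n P g" using stable_of_cond[OF mp] by blast
    hence "same_assignment n g f" using f by blast
    hence "same_assignment n g f0" using f0f unfolding same_assignment_def by simp
    hence "g i = f0 i \<and> comm_size n g i = comm_size n f0 i" using same_outcome i by blast
    hence e1: "f0 i = s" "comm_size n f0 i = cnt n g s" unfolding s_def comm_size_cnt by auto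
    have "((s, cnt n g s), (s, cnt n g s)) \<in> P i" using pr2 unfolding e1 .
    thus False using mo_irrefl[OF mo] by blast
  next
    case False
    then obtain p where p: "\<not> card (cset n P g s p) \<le> p - 1" unfolding cond_def by auto
    define X where "X = cset n P g s p"
    have iX: "i \<in> X"
    proof (rule ccontr)
      assume "i \<notin> X"
      hence "X \<subseteq> cset n P' g s p" unfolding X_def using cset_sub[OF PP'] by blast
      hence "card X \<le> card (cset n P' g s p)" by (simp add: card_mono)
      moreover have "cond n P' g s" using cg by (cases s) auto
      ultimately show False using p unfolding X_def cond_def by (meson le_trans)
    qed
    have Xsub: "X \<subseteq> {j. j < n \<and> g j = oth t}" unfolding X_def cset_def ost by auto
    have Xne: "X \<noteq> {}" using iX by auto
    have cX: "p \<le> card X" using p unfolding X_def by linarith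
    have xle: "card X \<le> cnt n g s"
      unfolding cnt_def
      by (rule card_mono[OF _ Xsub[unfolded ost]]) (rule finite_subset[of _ "{..<n}"], auto)
    have sum: "cnt n g t + cnt n g s = n" using cnt_sum[of n g t] ost by simp
    have pX: "\<forall>j\<in>X. ((t, cnt n g t + card X), (oth t, cnt n g (oth t))) \<in> P j"
    proof
      fix j assume j: "j \<in> X"
      hence j1: "j < n" "((oth s, n - cnt n g s + p), (s, cnt n g s)) \<in> P j"
        unfolding X_def cset_def by auto
      have moj: "monotonic_order n (P j)" using mp j1 unfolding monotonic_profile_def by auto
      have "n - cnt n g s + p = cnt n g t + p" using sum by linarith
      hence "((t, cnt n g t + p), (s, cnt n g s)) \<in> P j" using j1(2) unfolding t_def by simp
      hence "((t, cnt n g t + card X), (s, cnt n g s)) \<in> P j"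
        using mo_mono_le1[OF moj, of t "cnt n g t + p" _ "cnt n g t + card X"] cX xle sum by simp
      thus "((t, cnt n g t + card X), (oth t, cnt n g (oth t))) \<in> P j" unfolding ost .
    qed
    define h' where "h' = (\<lambda>j. if j \<in> X then t else g j)"
    have c': "cond n P h' t" unfolding h'_def by (rule preserve[OF mp ct Xsub Xne pX])
    obtain h'' where h'': "\<forall>j<n. h' j = t \<longrightarrow> h'' j = t" "cond n P h'' A" "cond n P h'' B"
      using exists_stable[OF mp c'] by blast
    have "stable n P h''" using stable_of_cond[OF mp h''(2,3)] .
    hence "same_assignment n h'' f" using f by blast
    hence "same_assignment n h'' f0" using f0f unfolding same_assignment_def by simp
    hence eqo: "h'' i = f0 i \<and> comm_size n h'' i = comm_size n f0 i" using same_outcome i by blast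
    have hi: "h'' i = t" using h''(1) i iX unfolding h'_def by simp
    have ch': "cnt n h' t = cnt n g t + card X" unfolding h'_def using cnt_move[OF Xsub] .
    have "cnt n h' t \<le> cnt n h'' t" unfolding cnt_def
      by (rule card_mono) (rule finite_subset[of _ "{..<n}"], auto simp: h''(1))
    hence le: "cnt n g t + p \<le> cnt n h'' t" using ch' cX by linarith
    have e2: "f0 i = t" "comm_size n f0 i = cnt n h'' t" using eqo hi unfolding comm_size_cnt by auto
    have pr3: "((s, cnt n g s), (t, cnt n h'' t)) \<in> P i"
      using pr2 unfolding e2 .
    have "cnt n h'' t \<le> n" using mo_out[OF mo pr3] by blast
    have "((t, cnt n g t + p), (s, cnt n g s)) \<in> P i"
    proof -
      have "i < n" "((oth s, n - cnt n g s + p), (s, cnt n g s)) \<in> P i"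
        using iX unfolding X_def cset_def by auto
      moreover have "n - cnt n g s + p = cnt n g t + p" using sum by linarith
      ultimately show ?thesis unfolding t_def by simp
    qed
    hence "((t, cnt n h'' t), (s, cnt n g s)) \<in> P i"
      using mo_mono_le1[OF mo _ le \<open>cnt n h'' t \<le> n\<close>] by blast
    hence "((s, cnt n g s), (s, cnt n g s)) \<in> P i" using mo_trans[OF mo pr3] by blast
    thus False using mo_irrefl[OF mo] by blast
  qed
qed

end
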